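(* For every pair of non-uniformly stable matchings $\mu,\sigma$ in $G$, both $\mu\wedge\sigma$ and $\mu\vee\sigma$ are non-uniformly stable matchings in $G$.
   Context: Setting: $G=(V,E)$ is a finite simple bipartite graph with $V=V_1\sqcup V_2$, every edge joining a vertex of $V_1$ to a vertex of $V_2$; an edge is identified with the set of its two endpoints. $E$ is partitioned into $E_1,E_2$. For $F\subseteq E$ and $v\in V$, $F(v)$ is the set of edges of $F$ incident to $v$. For every $v\in V$ there is a transitive and complete binary relation $\succsim_v$ on $E(v)\cup\{\emptyset\}$ with $e\succsim_v\emptyset$ and $\emptyset\not\succsim_v e$ for all $e\in E(v)$; $e\succ_v f$ means $e\succsim_v f$ and $f\not\succsim_v e$. A matching is $\mu\subseteq E$ with $|\mu(v)|\le1$ for all $v$; $\mu(v)$ denotes the edge of $\mu$ at $v$, or $\emptyset$. An edge $e\in E\setminus\mu$ weakly blocks $\mu$ if $e\succsim_v\mu(v)$ for every $v\in e$; it strongly blocks $\mu$ if additionally $e\succ_w\mu(w)$ for some $w\in e$. $\mu$ is non-uniformly stable if no edge of $E_1\setminus\mu$ weakly blocks $\mu$ and no edge of $E_2\setminus\mu$ strongly blocks $\mu$. For non-uniformly stable $\mu,\sigma$, define for each $v\in V_1$: $(\mu\wedge\sigma)(v)=\mu(v)$ if $\mu(v)\succsim_v\sigma(v)$ and $=\sigma(v)$ if $\sigma(v)\succ_v\mu(v)$; $(\mu\vee\sigma)(v)=\mu(v)$ if $\sigma(v)\succsim_v\mu(v)$ and $=\sigma(v)$ if $\mu(v)\succ_v\sigma(v)$.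 Then $\mu\wedge\sigma$ (resp. $\mu\vee\sigma$) is the set $\{(\mu\wedge\sigma)(v): v\in V_1\}\setminus\{\emptyset\}$ (resp. with $\vee$), a subset of $\mu\cup\sigma$. *)

theory Defs
  imports Main
begin

text \<open>Edges are two-element vertex sets; the empty set {} plays the role of the symbol \<emptyset>
  (no partner). A preference profile is pref :: vertex => edge => edge => bool, where
  pref v e f means e is weakly preferred to f at v.\<close>

definition bipartite_graph :: "'a set \<Rightarrow> 'a set \<Rightarrow> 'a set set \<Rightarrow> bool" where
  "bipartite_graph V1 V2 E \<longleftrightarrow> finite V1 \<and> finite V2 \<and> V1 \<inter> V2 = {} \<and>
     E \<subseteq> {{a, b} | a b. a \<in> V1 \<and> b \<in> V2}"

definition inc :: "'a set set \<Rightarrow> 'a \<Rightarrow> 'a set set" where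
  "inc F v = {e \<in> F. v \<in> e}"

definition pref_profile ::
  "'a set \<Rightarrow> 'a set set \<Rightarrow> ('a \<Rightarrow> 'a set \<Rightarrow> 'a set \<Rightarrow> bool) \<Rightarrow> bool" where
  "pref_profile V E pref \<longleftrightarrow> (\<forall>v\<in>V.
     (\<forall>e\<in>insert {} (inc E v). \<forall>f\<in>insert {} (inc E v). \<forall>g\<in>insert {} (inc E v).
        pref v e f \<longrightarrow> pref v f g \<longrightarrow> pref v e g) \<and>
     (\<forall>e\<in>insert {} (inc E v). \<forall>f\<in>insert {} (inc E v). pref v e f \<or> pref v f e) \<and>
     (\<forall>e\<in>inc E v. pref v e {} \<and> \<not> pref v {} e))"

definition strict_pref :: "('a \<Rightarrow> 'a set \<Rightarrow> 'a set \<Rightarrow> bool) \<Rightarrow> 'a \<Rightarrow> 'a set \<Rightarrow> 'a set \<Rightarrow> bool" where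
  "strict_pref pref v e f \<longleftrightarrow> pref v e f \<and> \<not> pref v f e"

definition matching :: "'a set set \<Rightarrow> 'a set set \<Rightarrow> bool" where
  "matching E \<mu> \<longleftrightarrow> \<mu> \<subseteq> E \<and> (\<forall>v. card (inc \<mu> v) \<le> 1)"

definition mate :: "'a set set \<Rightarrow> 'a \<Rightarrow> 'a set" where
  "mate \<mu> v = (if inc \<mu> v = {} then {} else the_elem (inc \<mu> v))"

definition weakly_blocks ::
  "('a \<Rightarrow> 'a set \<Rightarrow> 'a set \<Rightarrow> bool) \<Rightarrow> 'a set set \<Rightarrow> 'a set \<Rightarrow> bool" where
  "weakly_blocks pref \<mu> e \<longleftrightarrow> e \<notin> \<mu> \<and> (\<forall>v\<in>e. pref v e (mate \<mu> v))"

definition strongly_blocks ::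
  "('a \<Rightarrow> 'a set \<Rightarrow> 'a set \<Rightarrow> bool) \<Rightarrow> 'a set set \<Rightarrow> 'a set \<Rightarrow> bool" where
  "strongly_blocks pref \<mu> e \<longleftrightarrow> weakly_blocks pref \<mu> e \<and>
     (\<exists>w\<in>e. strict_pref pref w e (mate \<mu> w))"

definition nu_stable ::
  "'a set set \<Rightarrow> 'a set set \<Rightarrow> 'a set set \<Rightarrow> ('a \<Rightarrow> 'a set \<Rightarrow> 'a set \<Rightarrow> bool) \<Rightarrow> 'a set set \<Rightarrow> bool" where
  "nu_stable E E1 E2 pref \<mu> \<longleftrightarrow> matching E \<mu> \<and>
     (\<forall>e\<in>E1 - \<mu>. \<not> weakly_blocks pref \<mu> e) \<and>
     (\<forall>e\<in>E2 - \<mu>. \<not> strongly_blocks pref \<mu> e)"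

definition meet_match ::
  "'a set \<Rightarrow> ('a \<Rightarrow> 'a set \<Rightarrow> 'a set \<Rightarrow> bool) \<Rightarrow> 'a set set \<Rightarrow> 'a set set \<Rightarrow> 'a set set" where
  "meet_match V1 pref \<mu> \<sigma> =
     (\<lambda>v. if pref v (mate \<mu> v) (mate \<sigma> v) then mate \<mu> v else mate \<sigma> v) ` V1 - {{}}"

definition join_match ::
  "'a set \<Rightarrow> ('a \<Rightarrow> 'a set \<Rightarrow> 'a set \<Rightarrow> bool) \<Rightarrow> 'a set set \<Rightarrow> 'a set set \<Rightarrow> 'a set set" where
  "join_match V1 pref \<mu> \<sigma> =
     (\<lambda>v. if pref v (mate \<sigma> v) (mate \<mu> v) then mate \<mu> v else mate \<sigma> v) ` V1 - {{}}"

end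

theory Submission
  imports Defs
begin

locale NUS =
  fixes V1 V2 :: "'a set" and E E1 E2 :: "'a set set"
    and pref :: "'a \<Rightarrow> 'a set \<Rightarrow> 'a set \<Rightarrow> bool"
  assumes bip: "bipartite_graph V1 V2 E"
    and EU: "E1 \<union> E2 = E"
    and prof: "pref_profile (V1 \<union> V2) E pref"
begin

definition D where "D v = insert {} (inc E v)"

lemma finV: "finite V1" "finite V2" and disj: "V1 \<inter> V2 = {}"
  using bip unfolding bipartite_graph_def by auto

lemma edgeE: "e \<in> E \<Longrightarrow> \<exists>a b. a \<in> V1 \<and> b \<in> V2 \<and> e = {a, b}"
  using bip unfolding bipartite_graph_def by blast

lemma finE: "finite E"
proof -
  have "E \<subseteq> (\<lambda>(a,b). {a,b}) ` (V1 \<times> V2)"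
  proof
    fix e assume "e \<in> E"
    then obtain a b where "a \<in> V1" "b \<in> V2" "e = {a,b}" using edgeE by blast
    thus "e \<in> (\<lambda>(a,b). {a,b}) ` (V1 \<times> V2)" by (intro image_eqI[of _ _ "(a,b)"]) auto
  qed
  moreover have "finite ((\<lambda>(a,b). {a,b}) ` (V1 \<times> V2))" using finV by simp
  ultimately show ?thesis by (rule finite_subset)
qed

lemma prof_v: "v \<in> V1 \<union> V2 \<Longrightarrow>
     (\<forall>e\<in>D v. \<forall>f\<in>D v. \<forall>g\<in>D v. pref v e f \<longrightarrow> pref v f g \<longrightarrow> pref v e g) \<and>
     (\<forall>e\<in>D v. \<forall>f\<in>D v. pref v e f \<or> pref v f e) \<and>
     (\<forall>e\<in>inc E v. pref v e {} \<and> \<not> pref v {} e)"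
  using prof unfolding pref_profile_def D_def by (rule bspec)

lemma pref_trans: "v \<in> V1 \<union> V2 \<Longrightarrow> x \<in> D v \<Longrightarrow> y \<in> D v \<Longrightarrow> z \<in> D v \<Longrightarrow>
  pref v x y \<Longrightarrow> pref v y z \<Longrightarrow> pref v x z"
  using prof_v by blast

lemma pref_total: "v \<in> V1 \<union> V2 \<Longrightarrow> x \<in> D v \<Longrightarrow> y \<in> D v \<Longrightarrow> pref v x y \<or> pref v y x"
  using prof_v by blast

lemma pref_refl: "v \<in> V1 \<union> V2 \<Longrightarrow> x \<in> D v \<Longrightarrow> pref v x x"
  using pref_total by blast

lemma pref_empty: "v \<in> V1 \<union> V2 \<Longrightarrow> x \<in> inc E v \<Longrightarrow> \<not> pref v {} x"
  using prof_v by blast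

lemma strict_nonempty: "v \<in> V1 \<union> V2 \<Longrightarrow> y \<in> D v \<Longrightarrow> strict_pref pref v x y \<Longrightarrow> x \<noteq> {}"
  using pref_empty unfolding strict_pref_def D_def by auto

lemma inc_fin: "matching E \<mu> \<Longrightarrow> finite (inc \<mu> v)"
  unfolding matching_def inc_def using finE by (auto intro: finite_subset)

lemma mate_eq: "matching E \<mu> \<Longrightarrow> e \<in> \<mu> \<Longrightarrow> v \<in> e \<Longrightarrow> mate \<mu> v = e"
proof -
  assume m: "matching E \<mu>" and "e \<in> \<mu>" "v \<in> e"
  hence ei: "e \<in> inc \<mu> v" unfolding inc_def by auto
  have "card (inc \<mu> v) \<le> 1" using m unfolding matching_def by auto
  hence "inc \<mu> v = {e}" using ei inc_fin[OF m]
    using card_le_Suc0_iff_eq[OF inc_fin[OF m]] by auto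
  thus ?thesis unfolding mate_def by simp
qed

lemma mate_in: "matching E \<mu> \<Longrightarrow> mate \<mu> v \<noteq> {} \<Longrightarrow> mate \<mu> v \<in> \<mu> \<and> v \<in> mate \<mu> v"
proof -
  assume m: "matching E \<mu>" and ne: "mate \<mu> v \<noteq> {}"
  hence ne2: "inc \<mu> v \<noteq> {}" unfolding mate_def by auto
  then obtain e where ei: "e \<in> inc \<mu> v" by auto
  hence "e \<in> \<mu>" "v \<in> e" unfolding inc_def by auto
  thus ?thesis using mate_eq[OF m] by auto
qed

lemma mate_D: "matching E \<mu> \<Longrightarrow> mate \<mu> v \<in> D v"
proof (cases "mate \<mu> v = {}")
  case False
  assume m: "matching E \<mu>"
  with False have "mate \<mu> v \<in> \<mu>" "v \<in> mate \<mu> v" using mate_in by auto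
  moreover have "\<mu> \<subseteq> E" using m unfolding matching_def by auto
  ultimately show ?thesis unfolding D_def inc_def by auto
qed (auto simp: D_def)

lemma stable_match: "nu_stable E E1 E2 pref \<mu> \<Longrightarrow> matching E \<mu>"
  unfolding nu_stable_def by auto

lemma ends: "e \<in> E \<Longrightarrow> a \<in> V1 \<Longrightarrow> a \<in> e \<Longrightarrow> a' \<in> V1 \<Longrightarrow> a' \<in> e \<Longrightarrow> a' = a"
proof -
  assume h: "e \<in> E" "a \<in> V1" "a \<in> e" "a' \<in> V1" "a' \<in> e"
  then obtain x y where "x \<in> V1" "y \<in> V2" "e = {x,y}" using edgeE by blast
  thus "a' = a" using h disj by auto
qed

lemma ends2: "e \<in> E \<Longrightarrow> b \<in> V2 \<Longrightarrow> b \<in> e \<Longrightarrow> b' \<in> V2 \<Longrightarrow> b' \<in> e \<Longrightarrow> b' = b"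
proof -
  assume h: "e \<in> E" "b \<in> V2" "b \<in> e" "b' \<in> V2" "b' \<in> e"
  then obtain x y where "x \<in> V1" "y \<in> V2" "e = {x,y}" using edgeE by blast
  thus "b' = b" using h disj by auto
qed

lemma local_L:
  assumes rs: "nu_stable E E1 E2 pref \<rho>" and ts: "matching E \<tau>"
    and e: "e \<in> \<tau>" "v \<in> e" "w \<in> e" "v \<noteq> w"
    and st: "strict_pref pref v (mate \<tau> v) (mate \<rho> v)"
  shows "strict_pref pref w (mate \<rho> w) (mate \<tau> w)"
proof (rule ccontr)
  assume ns: "\<not> ?thesis"
  have eE: "e \<in> E" using ts e unfolding matching_def by auto
  then obtain a b where ab: "a \<in> V1" "b \<in> V2" "e = {a,b}" using edgeE by blast
  hence ev: "e = {v, w}" using e by auto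
  have vV: "v \<in> V1 \<union> V2" "w \<in> V1 \<union> V2" using ab e by auto
  have mt: "mate \<tau> v = e" "mate \<tau> w = e" using mate_eq[OF ts] e by auto
  have rm: "matching E \<rho>" using rs stable_match by auto
  have enr: "e \<notin> \<rho>"
  proof
    assume "e \<in> \<rho>"
    hence "mate \<rho> v = e" using mate_eq[OF rm] e by auto
    thus False using st mt unfolding strict_pref_def by auto
  qed
  have eD: "e \<in> D w" "e \<in> D v" using eE e unfolding D_def inc_def by auto
  have "pref w e (mate \<rho> w)"
    using ns pref_total[OF vV(2) eD(1) mate_D[OF rm]] mt unfolding strict_pref_def by auto
  moreover have "pref v e (mate \<rho> v)" using st mt unfolding strict_pref_def by auto
  ultimately have wb: "weakly_blocks pref \<rho> e" using enr ev unfolding weakly_blocks_def by auto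
  moreover have "strongly_blocks pref \<rho> e" using wb st mt e unfolding strongly_blocks_def by auto
  ultimately show False using rs EU eE enr unfolding nu_stable_def by blast
qed

definition Am where "Am \<mu> \<sigma> = {a \<in> V1. strict_pref pref a (mate \<sigma> a) (mate \<mu> a)}"
definition Bp where "Bp \<mu> \<sigma> = {b \<in> V2. strict_pref pref b (mate \<mu> b) (mate \<sigma> b)}"

lemma counting:
  assumes ms: "nu_stable E E1 E2 pref \<mu>" and ss: "nu_stable E E1 E2 pref \<sigma>"
  shows "\<forall>e\<in>\<mu> \<union> \<sigma>. \<forall>a\<in>V1. \<forall>b\<in>V2. e = {a,b} \<longrightarrow> (a \<in> Am \<mu> \<sigma> \<longleftrightarrow> b \<in> Bp \<mu> \<sigma>)"
proof -
  have mm: "matching E \<mu>" and sm: "matching E \<sigma>" using ms ss stable_match by auto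
  have mE: "\<mu> \<subseteq> E" and sE: "\<sigma> \<subseteq> E" using mm sm unfolding matching_def by auto
  define A where "A = Am \<mu> \<sigma>"
  define B where "B = Bp \<mu> \<sigma>"
  have AV: "A \<subseteq> V1" and BV: "B \<subseteq> V2" unfolding A_def B_def Am_def Bp_def by auto
  have finA: "finite A" and finB: "finite B" using AV BV finV finite_subset by auto
  define S\<sigma> where "S\<sigma> = {e \<in> \<sigma>. \<exists>a\<in>A. a \<in> e}"
  define T\<sigma> where "T\<sigma> = {e \<in> \<sigma>. \<exists>b\<in>B. b \<in> e}"
  define S\<mu> where "S\<mu> = {e \<in> \<mu>. \<exists>a\<in>A. a \<in> e}"
  define T\<mu> where "T\<mu> = {e \<in> \<mu>. \<exists>b\<in>B. b \<in> e}"
  have fins: "finite S\<sigma>" "finite T\<sigma>" "finite S\<mu>" "finite T\<mu>"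
    unfolding S\<sigma>_def T\<sigma>_def S\<mu>_def T\<mu>_def using finE mE sE
    by (auto intro: finite_subset)
  have sub1: "S\<sigma> \<subseteq> T\<sigma>"
  proof
    fix e assume "e \<in> S\<sigma>"
    then obtain a where e: "e \<in> \<sigma>" "a \<in> A" "a \<in> e" unfolding S\<sigma>_def by auto
    obtain x y where xy: "x \<in> V1" "y \<in> V2" "e = {x,y}" using edgeE e sE by blast
    have ax: "a \<noteq> y" using AV e disj xy by auto
    have "strict_pref pref a (mate \<sigma> a) (mate \<mu> a)" using e unfolding A_def Am_def by auto
    hence "strict_pref pref y (mate \<mu> y) (mate \<sigma> y)"
      using local_L[OF ms sm e(1) e(3), of y] xy ax by auto
    hence "y \<in> B" unfolding B_def Bp_def using xy by auto
    thus "e \<in> T\<sigma>" unfolding T\<sigma>_def using e xy by auto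
  qed
  have sub2: "T\<mu> \<subseteq> S\<mu>"
  proof
    fix e assume "e \<in> T\<mu>"
    then obtain b where e: "e \<in> \<mu>" "b \<in> B" "b \<in> e" unfolding T\<mu>_def by auto
    obtain x y where xy: "x \<in> V1" "y \<in> V2" "e = {x,y}" using edgeE e mE by blast
    have ax: "b \<noteq> x" using BV e disj xy by auto
    have "strict_pref pref b (mate \<mu> b) (mate \<sigma> b)" using e unfolding B_def Bp_def by auto
    hence "strict_pref pref x (mate \<sigma> x) (mate \<mu> x)"
      using local_L[OF ss mm e(1) e(3), of x] xy ax by auto
    hence "x \<in> A" unfolding A_def Am_def using xy by auto
    thus "e \<in> S\<mu>" unfolding S\<mu>_def using e xy by auto
  qed
  have c1: "card A \<le> card S\<sigma>"
  proof -
    have ne: "\<And>a. a \<in> A \<Longrightarrow> mate \<sigma> a \<noteq> {}"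
      using strict_nonempty[OF _ mate_D[OF mm]] AV unfolding A_def Am_def by auto
    have "inj_on (mate \<sigma>) A"
    proof (rule inj_onI)
      fix a a' assume h: "a \<in> A" "a' \<in> A" "mate \<sigma> a = mate \<sigma> a'"
      have 1: "mate \<sigma> a \<in> \<sigma>" "a \<in> mate \<sigma> a" using ne[OF h(1)] mate_in[OF sm] by auto
      have 2: "a' \<in> mate \<sigma> a" using ne[OF h(2)] mate_in[OF sm, of a'] h(3) by auto
      have "mate \<sigma> a \<in> E" using 1 sE by auto
      thus "a = a'" using ends[OF _ _ 1(2) _ 2] AV h by auto
    qed
    moreover have "mate \<sigma> ` A \<subseteq> S\<sigma>" unfolding S\<sigma>_def using ne mate_in[OF sm] by auto
    ultimately show ?thesis using fins by (intro card_inj_on_le) auto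
  qed
  have c2: "card T\<sigma> \<le> card B"
  proof -
    have "T\<sigma> \<subseteq> mate \<sigma> ` B" unfolding T\<sigma>_def using mate_eq[OF sm] by fastforce
    hence "card T\<sigma> \<le> card (mate \<sigma> ` B)" using finB by (intro card_mono) auto
    also have "\<dots> \<le> card B" by (rule card_image_le[OF finB])
    finally show ?thesis .
  qed
  have c3: "card B \<le> card T\<mu>"
  proof -
    have ne: "\<And>b. b \<in> B \<Longrightarrow> mate \<mu> b \<noteq> {}"
      using strict_nonempty[OF _ mate_D[OF sm]] BV unfolding B_def Bp_def by auto
    have "inj_on (mate \<mu>) B"
    proof (rule inj_onI)
      fix a a' assume h: "a \<in> B" "a' \<in> B" "mate \<mu> a = mate \<mu> a'"
      have 1: "mate \<mu> a \<in> \<mu>" "a \<in> mate \<mu> a" using ne[OF h(1)] mate_in[OF mm] by auto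
      have 2: "a' \<in> mate \<mu> a" using ne[OF h(2)] mate_in[OF mm, of a'] h(3) by auto
      have "mate \<mu> a \<in> E" using 1 mE by auto
      thus "a = a'" using ends2[OF _ _ 1(2) _ 2] BV h by auto
    qed
    moreover have "mate \<mu> ` B \<subseteq> T\<mu>" unfolding T\<mu>_def using ne mate_in[OF mm] by auto
    ultimately show ?thesis using fins by (intro card_inj_on_le) auto
  qed
  have c4: "card S\<mu> \<le> card A"
  proof -
    have "S\<mu> \<subseteq> mate \<mu> ` A" unfolding S\<mu>_def using mate_eq[OF mm] by fastforce
    hence "card S\<mu> \<le> card (mate \<mu> ` A)" using finA by (intro card_mono) auto
    also have "\<dots> \<le> card A" by (rule card_image_le[OF finA])
    finally show ?thesis .
  qed
  have k1: "card S\<sigma> \<le> card T\<sigma>" using sub1 fins by (intro card_mono) auto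
  have k2: "card T\<mu> \<le> card S\<mu>" using sub2 fins by (intro card_mono) auto
  have eq1: "S\<sigma> = T\<sigma>"
    using card_subset_eq[OF fins(2) sub1] k1 c2 c3 k2 c4 c1 by linarith
  have eq2: "T\<mu> = S\<mu>"
    using card_subset_eq[OF fins(3) sub2] k1 c2 c3 k2 c4 c1 by linarith
  show ?thesis
  proof (intro ballI impI)
    fix e a b assume e: "e \<in> \<mu> \<union> \<sigma>" and ab: "a \<in> V1" "b \<in> V2" "e = {a,b}"
    have eE: "e \<in> E" using e mE sE by auto
    show "a \<in> Am \<mu> \<sigma> \<longleftrightarrow> b \<in> Bp \<mu> \<sigma>"
    proof (cases "e \<in> \<sigma>")
      case True
      have "a \<in> A \<longleftrightarrow> e \<in> S\<sigma>" unfolding S\<sigma>_def using True ab AV ends[OF eE] by auto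
      moreover have "b \<in> B \<longleftrightarrow> e \<in> T\<sigma>" unfolding T\<sigma>_def using True ab BV ends2[OF eE] by auto
      ultimately show ?thesis using eq1 A_def B_def by auto
    next
      case False
      hence T: "e \<in> \<mu>" using e by auto
      have "a \<in> A \<longleftrightarrow> e \<in> S\<mu>" unfolding S\<mu>_def using T ab AV ends[OF eE] by auto
      moreover have "b \<in> B \<longleftrightarrow> e \<in> T\<mu>" unfolding T\<mu>_def using T ab BV ends2[OF eE] by auto
      ultimately show ?thesis using eq2 A_def B_def by auto
    qed
  qed
qed

lemma choice:
  assumes mm: "matching E \<mu>" and sm: "matching E \<sigma>"
    and PV: "P \<subseteq> V1" and QV: "Q \<subseteq> V2"
    and H: "\<forall>e\<in>\<mu> \<union> \<sigma>. \<forall>a\<in>V1. \<forall>b\<in>V2. e = {a,b} \<longrightarrow> (a \<in> P \<longleftrightarrow> b \<in> Q)"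
    and nu: "\<nu> = (\<lambda>a. if a \<in> P then mate \<sigma> a else mate \<mu> a) ` V1 - {{}}"
  shows "matching E \<nu> \<and> (\<forall>v. mate \<nu> v = (if v \<in> P \<union> Q then mate \<sigma> v else mate \<mu> v))"
proof -
  have mE: "\<mu> \<subseteq> E" and sE: "\<sigma> \<subseteq> E" using mm sm unfolding matching_def by auto
  define c where "c v = (if v \<in> P \<union> Q then mate \<sigma> v else mate \<mu> v)" for v
  have nE: "\<nu> \<subseteq> E"
  proof
    fix e assume "e \<in> \<nu>"
    hence i1: "e \<in> (\<lambda>a. if a \<in> P then mate \<sigma> a else mate \<mu> a) ` V1" "e \<noteq> {}"
      unfolding nu by auto
    from i1(1) obtain a where "e = (if a \<in> P then mate \<sigma> a else mate \<mu> a)" "a \<in> V1"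
      by (rule imageE)
    note this i1(2)
    thus "e \<in> E" using mate_in[OF mm, of a] mate_in[OF sm, of a] mE sE by (auto split: if_splits)
  qed
  have key: "inc \<nu> v \<subseteq> {c v}" for v
  proof
    fix e assume "e \<in> inc \<nu> v"
    hence ev: "e \<in> \<nu>" "v \<in> e" unfolding inc_def by auto
    hence i1: "e \<in> (\<lambda>a. if a \<in> P then mate \<sigma> a else mate \<mu> a) ` V1" "e \<noteq> {}"
      unfolding nu by auto
    from i1(1) obtain a where a0: "e = (if a \<in> P then mate \<sigma> a else mate \<mu> a)" "a \<in> V1"
      by (rule imageE)
    have a: "a \<in> V1" "e = (if a \<in> P then mate \<sigma> a else mate \<mu> a)" "e \<noteq> {}"
      using a0 i1(2) by auto
    show "e \<in> {c v}"
    proof (cases "a \<in> P")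
      case True
      hence e1: "e \<in> \<sigma>" "a \<in> e" using a mate_in[OF sm] by auto
      obtain x y where xy: "x \<in> V1" "y \<in> V2" "e = {x,y}" using edgeE e1 sE by blast
      have "a = x" using xy e1 a disj by auto
      then consider "v = x" | "v = y" using ev xy by auto
      thus ?thesis
      proof cases
        case 1 thus ?thesis using True a \<open>a = x\<close> c_def by auto
      next
        case 2 hence "y \<in> Q" using H e1 xy True \<open>a = x\<close> by auto
        thus ?thesis using c_def 2 mate_eq[OF sm e1(1)] xy by auto
      qed
    next
      case False
      hence e1: "e \<in> \<mu>" "a \<in> e" using a mate_in[OF mm] by auto
      obtain x y where xy: "x \<in> V1" "y \<in> V2" "e = {x,y}" using edgeE e1 mE by blast
      have "a = x" using xy e1 a disj by auto
      then consider "v = x" | "v = y" using ev xy by auto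
      thus ?thesis
      proof cases
        case 1 hence "v \<notin> Q" using QV disj xy by auto
        thus ?thesis using False a \<open>a = x\<close> c_def 1 by auto
      next
        case 2 hence "y \<notin> Q" "y \<notin> P" using H e1 xy False \<open>a = x\<close> PV disj by auto
        thus ?thesis using c_def 2 mate_eq[OF mm e1(1)] xy by auto
      qed
    qed
  qed
  have card: "card (inc \<nu> v) \<le> 1" for v
  proof -
    have "card (inc \<nu> v) \<le> card {c v}" using key[of v] by (intro card_mono) auto
    thus ?thesis by simp
  qed
  have mate: "mate \<nu> v = c v" for v
  proof (cases "c v = {}")
    case True
    have "{} \<notin> \<nu>" unfolding nu by auto
    hence "inc \<nu> v = {}" using key[of v] True unfolding inc_def by auto
    thus ?thesis using True unfolding mate_def by auto
  next
    case False
    have "c v \<in> \<nu>"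
    proof (cases "v \<in> P \<union> Q")
      case True
      hence cv: "c v = mate \<sigma> v" using c_def by auto
      hence e1: "c v \<in> \<sigma>" "v \<in> c v" using False mate_in[OF sm] by auto
      obtain x y where xy: "x \<in> V1" "y \<in> V2" "c v = {x,y}" using edgeE e1 sE by blast
      have "x \<in> P"
      proof (cases "v \<in> P")
        case True thus ?thesis using PV xy e1 disj by auto
      next
        case False hence "v \<in> Q" using \<open>v \<in> P \<union> Q\<close> by auto
        hence "v = y" using QV xy e1 disj by auto
        thus ?thesis using H e1 xy \<open>v \<in> Q\<close> by auto
      qed
      moreover have "mate \<sigma> x = c v" using mate_eq[OF sm e1(1), of x] xy by simp
      ultimately have "(if x \<in> P then mate \<sigma> x else mate \<mu> x) = c v" by simp
      hence "c v \<in> (\<lambda>a. if a \<in> P then mate \<sigma> a else mate \<mu> a) ` V1"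
        using xy(1) by (intro image_eqI[of _ _ x]) auto
      thus ?thesis unfolding nu using False by blast
    next
      case nT: False
      hence cv: "c v = mate \<mu> v" using c_def by auto
      hence e1: "c v \<in> \<mu>" "v \<in> c v" using False mate_in[OF mm] by auto
      obtain x y where xy: "x \<in> V1" "y \<in> V2" "c v = {x,y}" using edgeE e1 mE by blast
      have "x \<notin> P"
      proof (cases "v = x")
        case True thus ?thesis using nT by auto
      next
        case False hence "v = y" using xy e1 by auto
        thus ?thesis using H e1 xy nT by auto
      qed
      moreover have "mate \<mu> x = c v" using mate_eq[OF mm e1(1), of x] xy by simp
      ultimately have "(if x \<in> P then mate \<sigma> x else mate \<mu> x) = c v" by simp
      hence "c v \<in> (\<lambda>a. if a \<in> P then mate \<sigma> a else mate \<mu> a) ` V1"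
        using xy(1) by (intro image_eqI[of _ _ x]) auto
      thus ?thesis unfolding nu using False by blast
    qed
    moreover have "v \<in> c v"
    proof (cases "v \<in> P \<union> Q")
      case True thus ?thesis using \<open>c v \<noteq> {}\<close> mate_in[OF sm, of v] c_def by simp
    next
      case nF: False thus ?thesis using \<open>c v \<noteq> {}\<close> mate_in[OF mm, of v] c_def by simp
    qed
    ultimately have "inc \<nu> v = {c v}" using key[of v] unfolding inc_def by auto
    thus ?thesis unfolding mate_def by auto
  qed
  show ?thesis using nE card mate c_def unfolding matching_def by auto
qed

lemma transfer:
  assumes rs: "nu_stable E E1 E2 pref \<rho>" and nm: "matching E \<nu>"
    and eE: "e \<in> E" and en: "e \<notin> \<nu>"
    and pw: "\<forall>w\<in>e. pref w (mate \<nu> w) (mate \<rho> w)"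
    and eq: "\<exists>w\<in>e. mate \<nu> w = mate \<rho> w"
  shows "(e \<in> E1 \<longrightarrow> \<not> weakly_blocks pref \<nu> e) \<and> (e \<in> E2 \<longrightarrow> \<not> strongly_blocks pref \<nu> e)"
proof -
  have rm: "matching E \<rho>" using rs stable_match by auto
  have eV: "\<forall>w\<in>e. w \<in> V1 \<union> V2" using edgeE eE by auto
  have eD: "\<forall>w\<in>e. e \<in> D w" using eE unfolding D_def inc_def by auto
  have er: "e \<notin> \<rho>"
  proof
    assume "e \<in> \<rho>"
    then obtain w where "w \<in> e" "mate \<nu> w = e" using eq mate_eq[OF rm] by metis
    thus False using en mate_in[OF nm, of w] eE by (metis edgeE insert_not_empty)
  qed
  have tr: "pref w x z" if "w \<in> e" "x \<in> D w" "y \<in> D w" "z \<in> D w" "pref w x y" "pref w y z" for w x y z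
    using pref_trans[of w x y z] that eV by blast
  have wk: "weakly_blocks pref \<rho> e" if wb: "weakly_blocks pref \<nu> e"
  proof -
    have "pref w e (mate \<rho> w)" if we: "w \<in> e" for w
    proof -
      have "pref w e (mate \<nu> w)" using wb we unfolding weakly_blocks_def by auto
      moreover have "pref w (mate \<nu> w) (mate \<rho> w)" using pw we by auto
      ultimately show ?thesis using tr[OF we _ mate_D[OF nm] mate_D[OF rm]] eD we by blast
    qed
    thus ?thesis using er unfolding weakly_blocks_def by auto
  qed
  have sk: "strongly_blocks pref \<rho> e" if sb: "strongly_blocks pref \<nu> e"
  proof -
    have w: "weakly_blocks pref \<rho> e" using sb wk unfolding strongly_blocks_def by auto
    obtain w where w1: "w \<in> e" "strict_pref pref w e (mate \<nu> w)"
      using sb unfolding strongly_blocks_def by auto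
    have "\<not> pref w (mate \<rho> w) e"
    proof
      assume "pref w (mate \<rho> w) e"
      moreover have "pref w (mate \<nu> w) (mate \<rho> w)" using pw w1 by auto
      ultimately have "pref w (mate \<nu> w) e"
        using tr[OF w1(1) mate_D[OF nm] mate_D[OF rm]] eD w1 by blast
      thus False using w1 unfolding strict_pref_def by auto
    qed
    moreover have "pref w e (mate \<rho> w)" using w w1 unfolding weakly_blocks_def by auto
    ultimately have "strict_pref pref w e (mate \<rho> w)" unfolding strict_pref_def by auto
    thus ?thesis using w w1 unfolding strongly_blocks_def by auto
  qed
  show ?thesis using rs er eE wk sk unfolding nu_stable_def by blast
qed

lemma finish:
  assumes nm: "matching E \<nu>"
    and R: "\<And>a b. a \<in> V1 \<Longrightarrow> b \<in> V2 \<Longrightarrow> {a,b} \<in> E \<Longrightarrow> \<exists>\<rho>. nu_stable E E1 E2 pref \<rho> \<and>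
       (\<forall>w\<in>{a,b}. pref w (mate \<nu> w) (mate \<rho> w)) \<and> (\<exists>w\<in>{a,b}. mate \<nu> w = mate \<rho> w)"
  shows "nu_stable E E1 E2 pref \<nu>"
proof -
  have "(e \<in> E1 \<longrightarrow> \<not> weakly_blocks pref \<nu> e) \<and> (e \<in> E2 \<longrightarrow> \<not> strongly_blocks pref \<nu> e)"
    if ee: "e \<in> E" "e \<notin> \<nu>" for e
  proof -
    obtain a b where ab: "a \<in> V1" "b \<in> V2" "e = {a,b}" using edgeE ee by blast
    then obtain \<rho> where "nu_stable E E1 E2 pref \<rho>"
       "(\<forall>w\<in>e. pref w (mate \<nu> w) (mate \<rho> w))" "(\<exists>w\<in>e. mate \<nu> w = mate \<rho> w)"
      using R[of a b] ee by auto
    thus ?thesis using transfer[OF _ nm ee] by blast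
  qed
  thus ?thesis using nm EU unfolding nu_stable_def by blast
qed

end

theorem lemma5p3:
  fixes V1 V2 :: "'a set" and E E1 E2 :: "'a set set"
    and pref :: "'a \<Rightarrow> 'a set \<Rightarrow> 'a set \<Rightarrow> bool"
    and \<mu> \<sigma> :: "'a set set"
  assumes "bipartite_graph V1 V2 E"
    and "E1 \<union> E2 = E" and "E1 \<inter> E2 = {}"
    and "pref_profile (V1 \<union> V2) E pref"
    and "nu_stable E E1 E2 pref \<mu>" and "nu_stable E E1 E2 pref \<sigma>"
  shows "nu_stable E E1 E2 pref (meet_match V1 pref \<mu> \<sigma>) \<and>
         nu_stable E E1 E2 pref (join_match V1 pref \<mu> \<sigma>)"
proof -
  interpret NUS V1 V2 E E1 E2 pref using assms by unfold_locales auto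
  note ms = assms(5) and ss = assms(6)
  have mm: "matching E \<mu>" and sm: "matching E \<sigma>" using ms ss stable_match by auto
  have tot: "\<And>v. v \<in> V1 \<union> V2 \<Longrightarrow> pref v (mate \<mu> v) (mate \<sigma> v) \<or> pref v (mate \<sigma> v) (mate \<mu> v)"
    using pref_total mate_D[OF mm] mate_D[OF sm] by blast
  have rf: "\<And>v \<rho>. v \<in> V1 \<union> V2 \<Longrightarrow> matching E \<rho> \<Longrightarrow> pref v (mate \<rho> v) (mate \<rho> v)"
    using pref_refl mate_D by blast
  have meet: "nu_stable E E1 E2 pref (meet_match V1 pref \<mu> \<sigma>)"
  proof -
    define P where "P = Am \<mu> \<sigma>"
    define Q where "Q = Bp \<mu> \<sigma>"
    have PV: "P \<subseteq> V1" and QV: "Q \<subseteq> V2" unfolding P_def Q_def Am_def Bp_def by auto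
    have H: "\<forall>e\<in>\<mu> \<union> \<sigma>. \<forall>a\<in>V1. \<forall>b\<in>V2. e = {a,b} \<longrightarrow> (a \<in> P \<longleftrightarrow> b \<in> Q)"
      using counting[OF ms ss] P_def Q_def by auto
    have Pi: "a \<in> V1 \<Longrightarrow> a \<in> P \<longleftrightarrow> \<not> pref a (mate \<mu> a) (mate \<sigma> a)" for a
      using tot[of a] unfolding P_def Am_def strict_pref_def by auto
    have Qi: "b \<in> V2 \<Longrightarrow> b \<notin> Q \<Longrightarrow> b \<notin> P" for b using PV disj by auto
    have eqm: "meet_match V1 pref \<mu> \<sigma> = (\<lambda>a. if a \<in> P then mate \<sigma> a else mate \<mu> a) ` V1 - {{}}"
    proof -
      have fe: "\<forall>a\<in>V1. (\<lambda>a. if pref a (mate \<mu> a) (mate \<sigma> a) then mate \<mu> a else mate \<sigma> a) a = (if a \<in> P then mate \<sigma> a else mate \<mu> a)"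
        using Pi by auto
      have "(\<lambda>a. if pref a (mate \<mu> a) (mate \<sigma> a) then mate \<mu> a else mate \<sigma> a) ` V1 = (\<lambda>a. if a \<in> P then mate \<sigma> a else mate \<mu> a) ` V1"
        by (rule image_cong[OF refl]) (use fe in blast)
      thus ?thesis unfolding meet_match_def by simp
    qed
    have C: "matching E (meet_match V1 pref \<mu> \<sigma>) \<and> (\<forall>v. mate (meet_match V1 pref \<mu> \<sigma>) v =
        (if v \<in> P \<union> Q then mate \<sigma> v else mate \<mu> v))"
      by (rule choice[OF mm sm PV QV H eqm])
    show ?thesis
    proof (rule finish)
      show "matching E (meet_match V1 pref \<mu> \<sigma>)" using C by auto
    next
      fix a b assume ab: "a \<in> V1" "b \<in> V2" "{a,b} \<in> E"
      have aQ: "a \<notin> Q" using QV ab disj by auto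
      have bP: "b \<notin> P" using PV ab disj by auto
      have na: "mate (meet_match V1 pref \<mu> \<sigma>) a = (if a \<in> P then mate \<sigma> a else mate \<mu> a)"
        using C aQ by simp
      have nb: "mate (meet_match V1 pref \<mu> \<sigma>) b = (if b \<in> Q then mate \<sigma> b else mate \<mu> b)"
        using C bP by simp
      have aV: "a \<in> V1 \<union> V2" using ab by auto
      have pa: "pref a (mate (meet_match V1 pref \<mu> \<sigma>) a) (mate \<rho> a)" if "\<rho> = \<mu> \<or> \<rho> = \<sigma>" for \<rho>
      proof (cases "a \<in> P")
        case True
        hence "pref a (mate \<sigma> a) (mate \<mu> a)" using Pi[OF ab(1)] tot[OF aV] by blast
        thus ?thesis using na True that rf[OF aV sm] by auto
      next
        case False
        hence "pref a (mate \<mu> a) (mate \<sigma> a)" using Pi[OF ab(1)] by blast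
        thus ?thesis using na False that rf[OF aV mm] by auto
      qed
      show "\<exists>\<rho>. nu_stable E E1 E2 pref \<rho> \<and>
       (\<forall>w\<in>{a,b}. pref w (mate (meet_match V1 pref \<mu> \<sigma>) w) (mate \<rho> w)) \<and>
       (\<exists>w\<in>{a,b}. mate (meet_match V1 pref \<mu> \<sigma>) w = mate \<rho> w)"
      proof (cases "b \<in> Q")
        case True
        hence "mate (meet_match V1 pref \<mu> \<sigma>) b = mate \<sigma> b" using nb by simp
        moreover have "pref b (mate \<sigma> b) (mate \<sigma> b)" using rf[OF _ sm, of b] ab by auto
        ultimately show ?thesis using pa[of \<sigma>] ss by (intro exI[of _ \<sigma>]) auto
      next
        case False
        hence "mate (meet_match V1 pref \<mu> \<sigma>) b = mate \<mu> b" using nb by simp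
        moreover have "pref b (mate \<mu> b) (mate \<mu> b)" using rf[OF _ mm, of b] ab by auto
        ultimately show ?thesis using pa[of \<mu>] ms by (intro exI[of _ \<mu>]) auto
      qed
    qed
  qed
  have join: "nu_stable E E1 E2 pref (join_match V1 pref \<mu> \<sigma>)"
  proof -
    define P where "P = Am \<sigma> \<mu>"
    define Q where "Q = Bp \<sigma> \<mu>"
    have PV: "P \<subseteq> V1" and QV: "Q \<subseteq> V2" unfolding P_def Q_def Am_def Bp_def by auto
    have H: "\<forall>e\<in>\<mu> \<union> \<sigma>. \<forall>a\<in>V1. \<forall>b\<in>V2. e = {a,b} \<longrightarrow> (a \<in> P \<longleftrightarrow> b \<in> Q)"
      using counting[OF ss ms] P_def Q_def by (metis Un_commute)
    have Pi: "a \<in> V1 \<Longrightarrow> a \<in> P \<longleftrightarrow> \<not> pref a (mate \<sigma> a) (mate \<mu> a)" for a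
      using tot[of a] unfolding P_def Am_def strict_pref_def by auto
    have Qi: "b \<in> V2 \<Longrightarrow> b \<in> Q \<longleftrightarrow> \<not> pref b (mate \<mu> b) (mate \<sigma> b)" for b
      using tot[of b] unfolding Q_def Bp_def strict_pref_def by auto
    have eqm: "join_match V1 pref \<mu> \<sigma> = (\<lambda>a. if a \<in> P then mate \<sigma> a else mate \<mu> a) ` V1 - {{}}"
    proof -
      have fe: "\<forall>a\<in>V1. (\<lambda>a. if pref a (mate \<sigma> a) (mate \<mu> a) then mate \<mu> a else mate \<sigma> a) a = (if a \<in> P then mate \<sigma> a else mate \<mu> a)"
        using Pi by auto
      have "(\<lambda>a. if pref a (mate \<sigma> a) (mate \<mu> a) then mate \<mu> a else mate \<sigma> a) ` V1 = (\<lambda>a. if a \<in> P then mate \<sigma> a else mate \<mu> a) ` V1"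
        by (rule image_cong[OF refl]) (use fe in blast)
      thus ?thesis unfolding join_match_def by simp
    qed
    have C: "matching E (join_match V1 pref \<mu> \<sigma>) \<and> (\<forall>v. mate (join_match V1 pref \<mu> \<sigma>) v =
        (if v \<in> P \<union> Q then mate \<sigma> v else mate \<mu> v))"
      by (rule choice[OF mm sm PV QV H eqm])
    show ?thesis
    proof (rule finish)
      show "matching E (join_match V1 pref \<mu> \<sigma>)" using C by auto
    next
      fix a b assume ab: "a \<in> V1" "b \<in> V2" "{a,b} \<in> E"
      have aQ: "a \<notin> Q" using QV ab disj by auto
      have bP: "b \<notin> P" using PV ab disj by auto
      have na: "mate (join_match V1 pref \<mu> \<sigma>) a = (if a \<in> P then mate \<sigma> a else mate \<mu> a)"
        using C aQ by simp
      have nb: "mate (join_match V1 pref \<mu> \<sigma>) b = (if b \<in> Q then mate \<sigma> b else mate \<mu> b)"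
        using C bP by simp
      have bV: "b \<in> V1 \<union> V2" using ab by auto
      have pb: "pref b (mate (join_match V1 pref \<mu> \<sigma>) b) (mate \<rho> b)" if "\<rho> = \<mu> \<or> \<rho> = \<sigma>" for \<rho>
      proof (cases "b \<in> Q")
        case True
        hence "pref b (mate \<sigma> b) (mate \<mu> b)" using Qi[OF ab(2)] tot[OF bV] by blast
        thus ?thesis using nb True that rf[OF bV sm] by auto
      next
        case False
        hence "pref b (mate \<mu> b) (mate \<sigma> b)" using Qi[OF ab(2)] by blast
        thus ?thesis using nb False that rf[OF bV mm] by auto
      qed
      show "\<exists>\<rho>. nu_stable E E1 E2 pref \<rho> \<and>
       (\<forall>w\<in>{a,b}. pref w (mate (join_match V1 pref \<mu> \<sigma>) w) (mate \<rho> w)) \<and>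
       (\<exists>w\<in>{a,b}. mate (join_match V1 pref \<mu> \<sigma>) w = mate \<rho> w)"
      proof (cases "a \<in> P")
        case True
        hence "mate (join_match V1 pref \<mu> \<sigma>) a = mate \<sigma> a" using na by simp
        moreover have "pref a (mate \<sigma> a) (mate \<sigma> a)" using rf[OF _ sm, of a] ab by auto
        ultimately show ?thesis using pb[of \<sigma>] ss by (intro exI[of _ \<sigma>]) auto
      next
        case False
        hence "mate (join_match V1 pref \<mu> \<sigma>) a = mate \<mu> a" using na by simp
        moreover have "pref a (mate \<mu> a) (mate \<mu> a)" using rf[OF _ mm, of a] ab by auto
        ultimately show ?thesis using pb[of \<mu>] ms by (intro exI[of _ \<mu>]) auto
      qed
    qed
  qed
  show ?thesis using meet join by auto
qed


end
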